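(* Let $\mathbb{F}_q$ have characteristic $p\neq 2$, let $f(X)=aX^2+c\in\mathbb{F}_q[X]$ with $a\neq0$, let $r\ge 1$, and suppose $f^i(0)\neq f^j(0)$ for all $0\le i<j\le r$. Then for every $0\le j\le r-1$, writing $D=2^j$ and $F^j(U,W)=W^Df^j(U/W)$, the gradient of the form $F^j(U,W)+F^j(V,W)$ vanishes at no point $(u,v,w)\neq(0,0,0)$ of $\overline{\mathbb{F}_q}^{\,3}$; consequently the polynomial $f^j(X)+f^j(Y)$ is absolutely irreducible (irreducible over $\overline{\mathbb{F}_q}$).
   Context: The iterates are $f^0(X)=X$, $f^{j+1}(X)=f(f^j(X))$; $\overline{\mathbb{F}_q}$ is an algebraic closure of $\mathbb{F}_q$. *)

theory Defs
  imports "HOL-Algebra.Algebraic_Closure_Type"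
begin

definition iter_poly :: "'a::comm_ring_1 poly \<Rightarrow> nat \<Rightarrow> 'a poly" where
  "iter_poly f j = ((\<lambda>g. pcompose f g) ^^ j) [:0, 1:]"

text \<open>Bivariate polynomials in U, W are represented as 'a poly poly:
  the inner variable is U, the outer variable is W.
  Homogenisation F(U,W) = W^D p(U/W) = sum_k coeff p k U^k W^(D-k).\<close>
definition homog :: "nat \<Rightarrow> 'a::comm_ring_1 poly \<Rightarrow> 'a poly poly" where
  "homog D p = (\<Sum>k\<le>D. monom (monom (coeff p k) k) (D - k))"

text \<open>Trivariate polynomials in U, V, W are represented as 'a poly poly poly:
  innermost variable U, middle variable V, outer variable W.\<close>
definition lift_UW :: "'a::comm_ring_1 poly poly \<Rightarrow> 'a poly poly poly" where
  "lift_UW P = map_poly (\<lambda>q. [:q:]) P"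

definition lift_VW :: "'a::comm_ring_1 poly poly \<Rightarrow> 'a poly poly poly" where
  "lift_VW P = map_poly (map_poly (\<lambda>c. [:c:])) P"

definition eval3 :: "'a::comm_ring_1 poly poly poly \<Rightarrow> 'a \<Rightarrow> 'a \<Rightarrow> 'a \<Rightarrow> 'a" where
  "eval3 G u v w = poly (map_poly (\<lambda>Q. poly (map_poly (\<lambda>q. poly q u) Q) v) G) w"

definition dU :: "'a::idom poly poly poly \<Rightarrow> 'a poly poly poly" where
  "dU G = map_poly (map_poly pderiv) G"
definition dV :: "'a::idom poly poly poly \<Rightarrow> 'a poly poly poly" where
  "dV G = map_poly pderiv G"
definition dW :: "'a::idom poly poly poly \<Rightarrow> 'a poly poly poly" where
  "dW G = pderiv G"

definition sum_form :: "nat \<Rightarrow> 'a::comm_ring_1 poly \<Rightarrow> 'a poly poly poly" where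
  "sum_form D p = lift_UW (homog D p) + lift_VW (homog D p)"

text \<open>Bivariate p(X) + p(Y) as 'a poly poly (inner variable X, outer Y).\<close>
definition biv_sum :: "'a::comm_ring_1 poly \<Rightarrow> 'a poly poly" where
  "biv_sum p = [:p:] + map_poly (\<lambda>c. [:c:]) p"

end

theory Submission
  imports Defs "HOL-Computational_Algebra.Polynomial_Factorial"
begin



lemma map_poly_add_gen:
  assumes "f 0 = 0" "\<And>x y. f (x + y) = f x + f y"
  shows "map_poly f (p + q) = map_poly f p + map_poly f q"
  by (rule poly_eqI) (simp add: coeff_map_poly assms)

lemma map_poly_sum_gen:
  assumes "f 0 = 0" "\<And>x y. f (x + y) = f x + f y"
  shows "map_poly f (sum g A) = (\<Sum>x\<in>A. map_poly f (g x))"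
  by (induction A rule: infinite_finite_induct) (simp_all add: map_poly_add_gen assms)

lemma pderiv_sum_gen: "pderiv (sum g A) = (\<Sum>x\<in>A. pderiv (g x))"
  by (induction A rule: infinite_finite_induct) (simp_all add: pderiv_add)

lemma map_poly_smult_gen:
  assumes "f 0 = 0" "\<And>x y. f (x * y) = f x * f y"
  shows "map_poly f (smult a p) = smult (f a) (map_poly f p)"
  by (rule poly_eqI) (simp add: coeff_map_poly assms)

lemma map_poly_mult_gen:
  fixes f :: "'a::comm_ring_1 \<Rightarrow> 'b::comm_ring_1"
  assumes "f 0 = 0" "\<And>x y. f (x + y) = f x + f y" "\<And>x y. f (x * y) = f x * f y"
  shows "map_poly f (p * q) = map_poly f p * map_poly f q"
proof (induction p)
  case 0 then show ?case by simp
next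
  case (pCons a p)
  then show ?case by (simp add: map_poly_add_gen map_poly_smult_gen map_poly_pCons assms)
qed

lemma map_poly_pcompose_gen:
  fixes f :: "'a::comm_ring_1 \<Rightarrow> 'b::comm_ring_1"
  assumes "f 0 = 0" "\<And>x y. f (x + y) = f x + f y" "\<And>x y. f (x * y) = f x * f y"
  shows "map_poly f (pcompose p q) = pcompose (map_poly f p) (map_poly f q)"
proof (induction p)
  case 0 then show ?case by simp
next
  case (pCons a p)
  then show ?case
    by (simp add: pcompose_pCons map_poly_add_gen map_poly_mult_gen map_poly_pCons assms)
qed

lemma poly_map_poly_gen:
  fixes f :: "'a::comm_ring_1 \<Rightarrow> 'b::comm_ring_1"
  assumes "f 0 = 0" "\<And>x y. f (x + y) = f x + f y" "\<And>x y. f (x * y) = f x * f y"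
  shows "poly (map_poly f p) (f x) = f (poly p x)"
  by (induction p) (simp_all add: map_poly_pCons assms)

lemma map_poly_zero_fun: "map_poly (\<lambda>x. 0) p = 0"
  by (rule poly_eqI) (simp add: coeff_map_poly)

lemma pderiv_map_poly_gen:
  assumes "f 0 = 0" "\<And>n x. f (of_nat n * x) = of_nat n * f x"
  shows "pderiv (map_poly f p) = map_poly f (pderiv p)"
  by (rule poly_eqI) (simp add: coeff_map_poly coeff_pderiv assms del: of_nat_Suc)

section \<open>Iterates\<close>

lemma iter_0: "iter_poly f 0 = [:0,1:]" by (simp add: iter_poly_def)
lemma iter_Suc: "iter_poly f (Suc j) = pcompose f (iter_poly f j)"
  by (simp add: iter_poly_def)
lemma pcompose_idL': "pcompose [:0, 1:] (q::'a::comm_ring_1 poly) = q"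
  by (simp add: pcompose_pCons)
lemma iter_Suc': "iter_poly f (Suc j) = pcompose (iter_poly f j) f"
proof (induction j)
  case 0 then show ?case by (simp add: iter_Suc iter_0 pcompose_idL')
next
  case (Suc j)
  have "iter_poly f (Suc (Suc j)) = pcompose f (pcompose (iter_poly f j) f)"
    using Suc by (simp add: iter_Suc)
  also have "\<dots> = pcompose (iter_poly f (Suc j)) f" by (simp add: pcompose_assoc iter_Suc)
  finally show ?case .
qed
lemma poly_iter: "poly (iter_poly f j) x = (poly f ^^ j) x"
  by (induction j) (simp_all add: iter_0 iter_Suc poly_pcompose)
lemma poly_iter_add: "poly (iter_poly f (m + i)) x = poly (iter_poly f m) (poly (iter_poly f i) x)"
  by (simp add: poly_iter funpow_add)

lemma val_at_root:
  assumes "i \<le> j" "poly (iter_poly f i) x = 0"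
  shows "poly (iter_poly f j) x = poly (iter_poly f (j - i)) 0"
  using poly_iter_add[of f "j - i" i x] assms by simp

lemma crit:
  fixes a c x :: "'k::field"
  assumes "a \<noteq> 0" "(2::'k) \<noteq> 0"
  shows "poly (pderiv (iter_poly [:c,0,a:] j)) x = 0 \<Longrightarrow> \<exists>i<j. poly (iter_poly [:c,0,a:] i) x = 0"
proof (induction j)
  case 0 then show ?case by (simp add: iter_0 pderiv_pCons)
next
  case (Suc j)
  have "poly (pderiv (iter_poly [:c,0,a:] (Suc j))) x
     = 2 * a * poly (iter_poly [:c,0,a:] j) x * poly (pderiv (iter_poly [:c,0,a:] j)) x"
    by (simp add: iter_Suc pderiv_pcompose pderiv_pCons poly_pcompose algebra_simps)
  with Suc.prems assms have "poly (iter_poly [:c,0,a:] j) x = 0 \<or> poly (pderiv (iter_poly [:c,0,a:] j)) x = 0"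
    by simp
  then show ?case using Suc.IH by (meson less_Suc_eq)
qed

lemma degree_iter:
  fixes a c :: "'k::field"
  assumes "a \<noteq> 0"
  shows "degree (iter_poly [:c,0,a:] j) = 2 ^ j"
  by (induction j) (simp_all add: iter_0 iter_Suc degree_pcompose assms)

lemma orb:
  fixes a c :: "'k::field"
  assumes two: "(2::'k) \<noteq> 0"
    and dist: "\<forall>i j. i < j \<and> j \<le> r \<longrightarrow>
           poly (iter_poly [:c, 0, a:] i) 0 \<noteq> poly (iter_poly [:c, 0, a:] j) 0"
    and "1 \<le> m" "1 \<le> n" "m \<le> j" "n \<le> j" "j < r"
  shows "poly (iter_poly [:c, 0, a:] m) 0 + poly (iter_poly [:c, 0, a:] n) 0 \<noteq> 0"
proof
  define Ob where "Ob i = poly (iter_poly [:c, 0, a:] i) 0" for i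
  have OS: "Ob (Suc i) = c + a * Ob i ^ 2" for i
    by (simp add: Ob_def poly_iter power2_eq_square algebra_simps)
  assume "poly (iter_poly [:c, 0, a:] m) 0 + poly (iter_poly [:c, 0, a:] n) 0 = 0"
  then have e: "Ob m = - Ob n" unfolding Ob_def by (simp add: eq_neg_iff_add_eq_0)
  show False
  proof (cases "m = n")
    case True
    then have "2 * Ob m = 0" using e by simp
    then have "Ob m = 0" using two by simp
    moreover have "Ob 0 = 0" by (simp add: Ob_def iter_0)
    moreover have "0 < m" "m \<le> r" using assms(3,5,7) by auto
    ultimately show False using dist[rule_format, of 0 m] unfolding Ob_def by simp
  next
    case False
    have "Ob (Suc m) = Ob (Suc n)" using e by (simp add: OS)
    moreover have "Suc m \<le> r" "Suc n \<le> r" using assms by auto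
    moreover have "Suc m \<noteq> Suc n" using False by simp
    ultimately show False using dist[rule_format, of "Suc m" "Suc n"] dist[rule_format, of "Suc n" "Suc m"]
      unfolding Ob_def by (cases "m < n") auto
  qed
qed

lemma aff:
  fixes a c x y :: "'k::field"
  assumes a: "a \<noteq> 0" and two: "(2::'k) \<noteq> 0"
    and dist: "\<forall>i j. i < j \<and> j \<le> r \<longrightarrow>
           poly (iter_poly [:c, 0, a:] i) 0 \<noteq> poly (iter_poly [:c, 0, a:] j) 0"
    and jr: "j < r"
    and dx: "poly (pderiv (iter_poly [:c,0,a:] j)) x = 0"
    and dy: "poly (pderiv (iter_poly [:c,0,a:] j)) y = 0"
  shows "poly (iter_poly [:c,0,a:] j) x + poly (iter_poly [:c,0,a:] j) y \<noteq> 0"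
proof -
  obtain i where i: "i < j" "poly (iter_poly [:c,0,a:] i) x = 0" using crit[OF a two dx] by blast
  obtain k where k: "k < j" "poly (iter_poly [:c,0,a:] k) y = 0" using crit[OF a two dy] by blast
  have "poly (iter_poly [:c,0,a:] j) x = poly (iter_poly [:c,0,a:] (j - i)) 0"
    using val_at_root[of i j _ x] i by simp
  moreover have "poly (iter_poly [:c,0,a:] j) y = poly (iter_poly [:c,0,a:] (j - k)) 0"
    using val_at_root[of k j _ y] k by simp
  ultimately show ?thesis using orb[OF two dist, of "j - i" "j - k" j] i k jr by simp
qed




section \<open>Evaluation and derivatives of the trivariate forms\<close>

definition ev2 :: "'a::comm_ring_1 poly poly \<Rightarrow> 'a \<Rightarrow> 'a \<Rightarrow> 'a" where
  "ev2 P u w = poly (map_poly (\<lambda>q. poly q u) P) w"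

lemma eval3_UW: "eval3 (lift_UW P) u v w = ev2 P u w"
  unfolding eval3_def lift_UW_def ev2_def
  by (simp add: map_poly_map_poly o_def map_poly_pCons)

lemma eval3_VW: "eval3 (lift_VW P) u v w = ev2 P v w"
  unfolding eval3_def lift_VW_def ev2_def
  by (simp add: map_poly_map_poly o_def map_poly_pCons)

lemma eval3_add: "eval3 (A + B) u v w = eval3 A u v w + eval3 B u v w"
  unfolding eval3_def
  by (simp add: map_poly_add_gen poly_add)

lemma ev2_add: "ev2 (A + B) u w = ev2 A u w + ev2 B u w"
  unfolding ev2_def by (simp add: map_poly_add_gen poly_add)

lemma ev2_0: "ev2 0 u w = 0" by (simp add: ev2_def)

lemma ev2_sum: "ev2 (sum g A) u w = (\<Sum>x\<in>A. ev2 (g x) u w)"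
  by (induction A rule: infinite_finite_induct) (simp_all add: ev2_add ev2_0)

lemma ev2_monom: "ev2 (monom Y m) u w = poly Y u * w ^ m"
  by (simp add: ev2_def map_poly_monom poly_monom)

lemma pderiv_C: "pderiv (map_poly (\<lambda>c. [:c:]) Q) = map_poly (\<lambda>c. [:c:]) (pderiv (Q :: 'a::idom poly))"
  by (rule pderiv_map_poly_gen) (simp_all add: of_nat_poly)

lemma C_of_nat_mult: "map_poly (\<lambda>c. [:c:]) (of_nat n * x) = of_nat n * map_poly (\<lambda>c. [:c:]) (x :: 'a::idom poly)"
  by (rule poly_eqI) (simp add: coeff_map_poly of_nat_poly)

lemma pderiv_C2: "pderiv (map_poly (map_poly (\<lambda>c. [:c:])) P) = map_poly (map_poly (\<lambda>c. [:c:])) (pderiv (P :: 'a::idom poly poly))"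
  by (rule pderiv_map_poly_gen) (simp_all add: C_of_nat_mult)

lemma pderiv_C1: "pderiv (map_poly (\<lambda>q. [:q:]) P) = map_poly (\<lambda>q. [:q:]) (pderiv (P :: 'a::idom poly poly))"
  by (rule pderiv_map_poly_gen) (simp_all add: of_nat_poly)

lemma dU_UW: "dU (lift_UW P) = lift_UW (map_poly pderiv P)"
  unfolding dU_def lift_UW_def by (simp add: map_poly_map_poly o_def map_poly_pCons)

lemma dU_VW: "dU (lift_VW P) = 0"
  unfolding dU_def lift_VW_def
  by (simp add: map_poly_map_poly o_def map_poly_pCons pderiv_pCons map_poly_zero_fun)

lemma dV_UW: "dV (lift_UW P) = 0"
  unfolding dV_def lift_UW_def
  by (simp add: map_poly_map_poly o_def pderiv_pCons map_poly_zero_fun)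

lemma dV_VW: "dV (lift_VW P) = lift_VW (map_poly pderiv P)"
  unfolding dV_def lift_VW_def by (simp add: map_poly_map_poly o_def pderiv_C)

lemma dW_UW: "dW (lift_UW P) = lift_UW (pderiv P)"
  unfolding dW_def lift_UW_def by (simp add: pderiv_C1)

lemma dW_VW: "dW (lift_VW P) = lift_VW (pderiv P)"
  unfolding dW_def lift_VW_def by (simp add: pderiv_C2)

lemma dU_add: "dU (A + B) = dU A + dU B"
  unfolding dU_def by (intro map_poly_add_gen) (simp_all add: map_poly_add_gen pderiv_add)

lemma dV_add: "dV (A + B) = dV A + dV B"
  unfolding dV_def by (intro map_poly_add_gen) (simp_all add: pderiv_add)

lemma dW_add: "dW (A + B) = dW A + dW B"
  unfolding dW_def by (simp add: pderiv_add)

lemma grad_sum_form: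
  "eval3 (dU (sum_form D p)) u v w = ev2 (map_poly pderiv (homog D p)) u w"
  "eval3 (dV (sum_form D p)) u v w = ev2 (map_poly pderiv (homog D p)) v w"
  "eval3 (dW (sum_form D p)) u v w = ev2 (pderiv (homog D p)) u w + ev2 (pderiv (homog D p)) v w"
  unfolding sum_form_def
  by (simp_all add: dU_add dV_add dW_add dU_UW dU_VW dV_UW dV_VW dW_UW dW_VW eval3_add eval3_UW eval3_VW)

lemma H1: "ev2 (homog D p) u w = (\<Sum>k\<le>D. coeff p k * u^k * w^(D-k))"
  by (simp add: homog_def ev2_sum ev2_monom poly_monom)

lemma H2: "ev2 (map_poly pderiv (homog D p)) u w = (\<Sum>k\<le>D. of_nat k * coeff p k * u^(k-1) * w^(D-k))"
  unfolding homog_def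
  by (simp add: map_poly_sum_gen[of pderiv, OF pderiv_0 pderiv_add] ev2_sum map_poly_monom
      pderiv_monom ev2_monom poly_monom)

lemma H3: "ev2 (pderiv (homog D p)) u w = (\<Sum>k\<le>D. of_nat (D-k) * coeff p k * u^k * w^(D-k-1))"
  unfolding homog_def
  by (simp add: pderiv_sum_gen ev2_sum pderiv_monom ev2_monom poly_monom mult.assoc)

lemma euler:
  "u * ev2 (map_poly pderiv (homog D p)) u w + w * ev2 (pderiv (homog D p)) u w
     = of_nat D * ev2 (homog D p) u w"
proof -
  have *: "u * (of_nat k * coeff p k * u^(k-1) * w^(D-k)) + w * (of_nat (D-k) * coeff p k * u^k * w^(D-k-1))
        = of_nat D * (coeff p k * u^k * w^(D-k))" if kD: "k \<le> D" for k
  proof -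
    have e1: "u * (of_nat k * u^(k-1)) = of_nat k * u^k" by (cases k) auto
    have e2: "w * (of_nat (D-k) * w^(D-k-1)) = of_nat (D-k) * w^(D-k)" by (cases "D-k") auto
    have "u * (of_nat k * coeff p k * u^(k-1) * w^(D-k)) + w * (of_nat (D-k) * coeff p k * u^k * w^(D-k-1))
        = coeff p k * w^(D-k) * (u * (of_nat k * u^(k-1))) + coeff p k * u^k * (w * (of_nat (D-k) * w^(D-k-1)))"
      by (simp only: ac_simps)
    also have "\<dots> = (of_nat k + of_nat (D-k)) * (coeff p k * u^k * w^(D-k))"
      unfolding e1 e2 by (simp add: algebra_simps)
    also have "of_nat k + of_nat (D-k) = (of_nat D :: 'a)" using kD by (simp flip: of_nat_add)
    finally show ?thesis .
  qed
  have "u * ev2 (map_poly pderiv (homog D p)) u w + w * ev2 (pderiv (homog D p)) u w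
     = (\<Sum>k\<le>D. u * (of_nat k * coeff p k * u^(k-1) * w^(D-k)) + w * (of_nat (D-k) * coeff p k * u^k * w^(D-k-1)))"
    by (simp add: H2 H3 sum_distrib_left sum.distrib)
  also have "\<dots> = (\<Sum>k\<le>D. of_nat D * (coeff p k * u^k * w^(D-k)))"
    by (rule sum.cong[OF refl], rule *, simp)
  also have "\<dots> = of_nat D * ev2 (homog D p) u w"
    by (simp add: H1 sum_distrib_left)
  finally show ?thesis .
qed

lemma H2_w0: "ev2 (map_poly pderiv (homog D p)) u 0 = of_nat D * coeff p D * u^(D-1)"
proof -
  have "(\<Sum>k\<le>D. of_nat k * coeff p k * u^(k-1) * 0^(D-k))
      = (\<Sum>k\<le>D. if k = D then of_nat k * coeff p k * u^(k-1) else 0)"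
    by (rule sum.cong) (auto simp: power_0_left)
  then show ?thesis by (simp add: H2)
qed

lemma H1_scale:
  assumes "w \<noteq> 0"
  shows "ev2 (homog D p) u w = w^D * ev2 (homog D p) (u/w) (1::'k::field)"
proof -
  have "coeff p k * u^k * w^(D-k) = w^D * (coeff p k * (u/w)^k * 1^(D-k))" if kD: "k \<le> D" for k
  proof -
    obtain m where m: "D = k + m" using le_Suc_ex[OF kD] by blast
    have "w^D * (coeff p k * (u/w)^k * 1^(D-k)) = coeff p k * w^m * (w^k * (u^k / w^k))"
      unfolding m by (simp add: power_add power_divide ac_simps)
    also have "\<dots> = coeff p k * u^k * w^(D-k)" using assms m by simp
    finally show ?thesis by (rule sym)
  qed
  note * = this
  show ?thesis unfolding H1 sum_distrib_left by (rule sum.cong[OF refl], rule *, simp)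
qed

lemma H2_scale:
  assumes "w \<noteq> 0"
  shows "ev2 (map_poly pderiv (homog D p)) u w = w^(D-1) * ev2 (map_poly pderiv (homog D p)) (u/w) (1::'k::field)"
proof -
  have "of_nat k * coeff p k * u^(k-1) * w^(D-k) = w^(D-1) * (of_nat k * coeff p k * (u/w)^(k-1) * 1^(D-k))"
    if kD: "k \<le> D" for k
  proof (cases k)
    case 0 then show ?thesis by simp
  next
    case (Suc k')
    obtain m where m: "D = k + m" using le_Suc_ex[OF kD] by blast
    have "w^(D-1) * (of_nat k * coeff p k * (u/w)^(k-1) * 1^(D-k))
        = of_nat k * coeff p k * w^m * (w^k' * (u^k' / w^k'))"
      unfolding m Suc by (simp add: power_add power_divide ac_simps)
    also have "\<dots> = of_nat k * coeff p k * u^(k-1) * w^(D-k)" using assms m Suc by simp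
    finally show ?thesis by (rule sym)
  qed
  note * = this
  show ?thesis unfolding H2 sum_distrib_left by (rule sum.cong[OF refl], rule *, simp)
qed

lemma H1_one:
  assumes "degree p \<le> D"
  shows "ev2 (homog D p) x 1 = poly p x"
proof -
  have "poly p x = poly (\<Sum>i\<le>D. monom (coeff p i) i) x"
    using poly_as_sum_of_monoms'[OF assms] by simp
  then show ?thesis by (simp add: H1 poly_sum poly_monom)
qed

lemma H2_one:
  assumes "degree p \<le> D"
  shows "ev2 (map_poly pderiv (homog D p)) x 1 = poly (pderiv p) x"
proof -
  have "poly (pderiv p) x = poly (pderiv (\<Sum>i\<le>D. monom (coeff p i) i)) x"
    using poly_as_sum_of_monoms'[OF assms] by simp
  then show ?thesis by (simp add: H2 poly_sum poly_monom pderiv_sum_gen pderiv_monom mult.assoc)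
qed

lemma grad_main:
  fixes g :: "'k::field poly" and D :: nat
  assumes deg: "degree g = D" and D0: "(of_nat D :: 'k) \<noteq> 0"
    and affine: "\<And>x y. poly (pderiv g) x = 0 \<Longrightarrow> poly (pderiv g) y = 0 \<Longrightarrow> poly g x + poly g y \<noteq> 0"
    and nz: "(u, v, w) \<noteq> (0, 0, 0)"
  shows "\<not> (eval3 (dU (sum_form D g)) u v w = 0 \<and> eval3 (dV (sum_form D g)) u v w = 0 \<and>
            eval3 (dW (sum_form D g)) u v w = 0)"
proof
  assume h: "eval3 (dU (sum_form D g)) u v w = 0 \<and> eval3 (dV (sum_form D g)) u v w = 0 \<and>
            eval3 (dW (sum_form D g)) u v w = 0"
  let ?H = "homog D g"
  have hU: "ev2 (map_poly pderiv ?H) u w = 0" and hV: "ev2 (map_poly pderiv ?H) v w = 0"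
    and hW: "ev2 (pderiv ?H) u w + ev2 (pderiv ?H) v w = 0"
    using h by (simp_all add: grad_sum_form)
  have "D \<noteq> 0" using D0 by (intro notI) simp
  then have g0: "g \<noteq> 0" using deg by auto
  have lc: "coeff g D \<noteq> 0" using g0 deg by (metis leading_coeff_0_iff)
  show False
  proof (cases "w = 0")
    case True
    have "of_nat D * coeff g D * u^(D-1) = 0" using hU True by (simp add: H2_w0)
    then have u0: "u = 0" using D0 lc by simp
    have "of_nat D * coeff g D * v^(D-1) = 0" using hV True by (simp add: H2_w0)
    then have "v = 0" using D0 lc by simp
    then show False using u0 True nz by simp
  next
    case False
    define x where "x = u / w"
    define y where "y = v / w"
    have sU: "ev2 (map_poly pderiv ?H) u w = w^(D-1) * poly (pderiv g) x"
      using H2_scale[OF False, of D g u] H2_one[of g D x] deg x_def by simp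
    have sV: "ev2 (map_poly pderiv ?H) v w = w^(D-1) * poly (pderiv g) y"
      using H2_scale[OF False, of D g v] H2_one[of g D y] deg y_def by simp
    have tU: "ev2 ?H u w = w^D * poly g x"
      using H1_scale[OF False, of D g u] H1_one[of g D x] deg x_def by simp
    have tV: "ev2 ?H v w = w^D * poly g y"
      using H1_scale[OF False, of D g v] H1_one[of g D y] deg y_def by simp
    have dx: "poly (pderiv g) x = 0" using hU sU False by simp
    have dy: "poly (pderiv g) y = 0" using hV sV False by simp
    have eu: "w * ev2 (pderiv ?H) u w = of_nat D * (w^D * poly g x)"
      using euler[of u D g w] hU tU by simp
    have ev: "w * ev2 (pderiv ?H) v w = of_nat D * (w^D * poly g y)"
      using euler[of v D g w] hV tV by simp
    have "of_nat D * (w^D * (poly g x + poly g y)) = w * (ev2 (pderiv ?H) u w + ev2 (pderiv ?H) v w)"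
      using eu ev by (simp add: algebra_simps)
    also have "\<dots> = 0" using hW by simp
    finally have "poly g x + poly g y = 0" using D0 False by simp
    then show False using affine[OF dx dy] by simp
  qed
qed




section \<open>Irreducibility\<close>

lemma tau_tau: "pcompose (pcompose H [:0,-1:]) [:0,-1:] = (H :: 'b::comm_ring_1 poly)"
  by (simp add: pcompose_assoc[symmetric] pcompose_pCons)

lemma even_Z2:
  fixes H :: "'k::field poly poly"
  assumes two: "(2::'k) \<noteq> 0"
  shows "pcompose H [:0,-1:] = H \<Longrightarrow> \<exists>H0. H = pcompose H0 [:0,0,1:]"
proof (induction "degree H" arbitrary: H rule: less_induct)
  case less
  obtain h0 H1 where H: "H = pCons h0 H1" by (cases H)
  obtain h1 H2 where H1: "H1 = pCons h1 H2" by (cases H1)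
  have tau: "pcompose H [:0,-1:] = pCons h0 (pCons (-h1) (pcompose H2 [:0,-1:]))"
    unfolding H H1 by (simp add: pcompose_pCons)
  with less.prems have e: "-h1 = h1" "pcompose H2 [:0,-1:] = H2"
    unfolding H H1 by simp_all
  have "2 * h1 = 0" using e(1) by (metis mult_2 neg_eq_iff_add_eq_0)
  moreover have "(2 :: 'k poly) \<noteq> 0" using two by (metis of_nat_numeral of_nat_poly pCons_eq_0_iff)
  ultimately have h1: "h1 = 0" by simp
  show ?case
  proof (cases "H2 = 0")
    case True
    then show ?thesis unfolding H H1 h1 by (intro exI[of _ "[:h0:]"]) simp
  next
    case False
    then have "degree H2 < degree H" unfolding H H1 by simp
    from less.hyps[OF this e(2)] obtain H0 where "H2 = pcompose H0 [:0,0,1:]" by blast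
    then show ?thesis unfolding H H1 h1
      by (intro exI[of _ "pCons h0 H0"]) (simp add: pcompose_pCons)
  qed
qed

lemma even_S:
  fixes H :: "'k::field poly poly" and a c :: 'k
  assumes two: "(2::'k) \<noteq> 0" and a: "a \<noteq> 0"
    and ev: "pcompose H [:0,-1:] = H"
  shows "\<exists>M. H = pcompose M [:[:c:],0,[:a:]:]"
proof -
  obtain H0 where H0: "H = pcompose H0 [:0,0,1:]" using even_Z2[OF two ev] by blast
  define Lp where "Lp = [:[:-c/a:], [:1/a:]:]"
  have L: "pcompose Lp [:[:c:],0,[:a:]:] = [:0,0,1:]"
    using a by (simp add: Lp_def pcompose_pCons field_simps)
  show ?thesis
    by (intro exI[of _ "pcompose H0 Lp"])
       (simp only: H0 pcompose_assoc[symmetric] L)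
qed

lemma dvd_descent:
  fixes M Q :: "'k::field poly poly" and a c :: 'k
  assumes two: "(2::'k) \<noteq> 0" and a: "a \<noteq> 0"
    and d: "pcompose M [:[:c:],0,[:a:]:] dvd pcompose Q [:[:c:],0,[:a:]:]"
  shows "M dvd Q"
proof -
  define S where "S = [:[:c:],0,[:a:]:]"
  have degS: "degree S = 2" using a by (simp add: S_def)
  have tauS: "pcompose S [:0,-1:] = S" by (simp add: S_def pcompose_pCons)
  have inv: "pcompose (pcompose XX S) [:0,-1:] = pcompose XX S" for XX
    by (simp add: pcompose_assoc[symmetric] tauS)
  obtain T where T: "pcompose Q S = pcompose M S * T" using d unfolding S_def by blast
  show ?thesis
  proof (cases "M = 0")
    case True
    then have "pcompose Q S = 0" using T by simp
    then have "Q = 0" using degS pcompose_eq_0 by fastforce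
    then show ?thesis by simp
  next
    case False
    then have MS0: "pcompose M S \<noteq> 0" using degS by (simp add: pcompose_eq_0_iff)
    have "pcompose (pcompose Q S) [:0,-1:] = pcompose (pcompose M S * T) [:0,-1:]" using T by simp
    then have T2: "pcompose Q S = pcompose M S * pcompose T [:0,-1:]" by (simp only: inv pcompose_mult)
    have e: "pcompose M S * T = pcompose M S * pcompose T [:0,-1:]" using T T2 by metis
    have "T = pcompose T [:0,-1:]" using e MS0 by (simp add: mult_cancel_left)
    then have "pcompose T [:0,-1:] = T" by (rule sym)
    then obtain T' where T': "T = pcompose T' S" using even_S[OF two a] unfolding S_def by blast
    have "pcompose (Q - M * T') S = 0" using T T' by (simp add: pcompose_diff pcompose_mult)
    then have "Q = M * T'" using degS pcompose_eq_0 by fastforce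
    then show ?thesis by simp
  qed
qed

lemma KL:
  fixes Q :: "'a::field alg_closure poly poly" and a c :: "'a alg_closure"
  assumes irr: "irreducible Q" and a: "a \<noteq> 0" and two: "(2::'a alg_closure) \<noteq> 0"
    and nsq: "\<not>(\<exists>\<kappa> h. poly Q [:c:] = smult \<kappa> (h*h))"
  shows "irreducible (pcompose Q [:[:c:],0,[:a:]:])"
proof -
  define S where "S = [:[:c:],0,[:a:]:]"
  define tau where "tau XX = pcompose XX [:0,-1:]" for XX :: "'a alg_closure poly poly"
  define R where "R = pcompose Q S"
  have degS: "degree S = 2" using a by (simp add: S_def)
  have tauS: "tau S = S" by (simp add: tau_def S_def pcompose_pCons)
  have tau_mult: "tau (XX*Y) = tau XX * tau Y" for XX Y by (simp add: tau_def pcompose_mult)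
  have tau_tau': "tau (tau XX) = XX" for XX by (simp add: tau_def tau_tau)
  have tauR: "tau R = R" using tauS by (simp add: tau_def R_def pcompose_assoc[symmetric])
  have tau_unit: "is_unit XX \<Longrightarrow> tau XX = XX" for XX by (auto simp: is_unit_poly_iff tau_def)
  have comp_unit: "is_unit XX \<Longrightarrow> pcompose XX S = XX" for XX by (auto simp: is_unit_poly_iff)
  have poly_tau0: "poly (tau XX) 0 = poly XX 0" for XX by (simp add: tau_def poly_pcompose)
  have polyR0: "poly R 0 = poly Q [:c:]" by (simp add: R_def S_def poly_pcompose)
  have two': "(2 :: 'a alg_closure poly) \<noteq> 0" using two by (metis of_nat_numeral of_nat_poly pCons_eq_0_iff)
  have Q0: "Q \<noteq> 0" using irr by auto
  have R0: "R \<noteq> 0" using Q0 degS by (simp add: R_def pcompose_eq_0_iff)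
  show ?thesis
  proof (cases "degree Q = 0")
    case True
    then have "R = Q" unfolding R_def by (metis degree_0_id pcompose_const)
    then show ?thesis using irr R_def S_def by simp
  next
    case False
    have "degree R = degree Q * 2" using degS by (simp add: R_def degree_pcompose)
    then have "\<not> is_unit R" using False by (auto simp: is_unit_poly_iff)
    then obtain H where H: "H dvd R" "prime H" using prime_divisor_exists R0 by blast
    then have Hirr: "irreducible H" by (simp add: prime_elem_imp_irreducible prime_imp_prime_elem)
    then have H0: "H \<noteq> 0" and Hnu: "\<not> is_unit H" by (auto simp: irreducible_def)
    obtain K where K: "R = H * K" using H(1) by blast
    have tHR: "tau H dvd R" using arg_cong[OF K, of tau] tauR tau_mult by (metis dvd_triv_left)
    have tHirr: "irreducible (tau H)"
    proof (rule irreducibleI)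
      show "tau H \<noteq> 0" using H0 tau_tau'[of H] by (metis pcompose_0 tau_def)
      show "\<not> is_unit (tau H)" using Hnu tau_unit tau_tau' by metis
      fix x y assume "tau H = x * y"
      then have "H = tau x * tau y" using tau_tau' tau_mult by metis
      then have "is_unit (tau x) \<or> is_unit (tau y)" using Hirr irreducibleD by blast
      then show "is_unit x \<or> is_unit y" using tau_unit tau_tau' by metis
    qed
    show ?thesis
    proof (cases "H dvd tau H")
      case True
      then obtain u where u: "tau H = H * u" by blast
      have "H * 1 = H * (u * tau u)" using arg_cong[OF u, of tau] tau_tau' tau_mult u
        by (metis mult.assoc mult_1_right)
      then have u1: "u * tau u = 1" using H0 by (metis mult_cancel_left)
      then have uu: "is_unit u" by (metis dvd_triv_left)
      then have "u * u = 1" using u1 tau_unit by metis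
      then have "(u - 1) * (u + 1) = 0" by (simp add: algebra_simps)
      then have "u = 1 \<or> u = -1" by (simp add: eq_neg_iff_add_eq_0)
      then show ?thesis
      proof
        assume "u = 1"
        then have "tau H = H" using u by simp
        then obtain M where M: "H = pcompose M S" using even_S[OF _ a, of H c] two
          unfolding tau_def S_def by auto
        have "M dvd Q" using dvd_descent[OF _ a, of M c Q] two H(1) M unfolding R_def S_def by simp
        then obtain v where v: "Q = M * v" by blast
        have "is_unit M \<or> is_unit v" using irr v irreducibleD by blast
        moreover have "\<not> is_unit M" using Hnu M comp_unit by metis
        ultimately have vu: "is_unit v" by blast
        have "R = v * H" unfolding R_def v using M comp_unit[OF vu] by (simp add: pcompose_mult mult.commute)
        moreover have "irreducible (v * H)" using irreducible_mult_unit_left[OF vu] Hirr by simp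
        ultimately show ?thesis unfolding R_def S_def by simp
      next
        assume "u = -1"
        then have "tau H = - H" using u by simp
        then have "poly H 0 = - poly H 0" using poly_tau0[of H] by simp
        then have "2 * poly H 0 = 0" by (metis mult_2 neg_eq_iff_add_eq_0)
        then have "poly H 0 = 0" using two' by simp
        then have "poly Q [:c:] = smult 0 (0 * 0)" using polyR0 K by simp
        then show ?thesis using nsq by blast
      qed
    next
      case False
      have ptH: "prime_elem (tau H)" using tHirr by (simp add: irreducible_imp_prime_elem)
      have "tau H dvd H * K" using tHR K by simp
      then have "tau H dvd H \<or> tau H dvd K" using ptH prime_elem_dvd_mult_iff by blast
      moreover have "\<not> tau H dvd H"
      proof
        assume "tau H dvd H"
        then obtain m where m: "H = tau H * m" by blast
        then have "is_unit (tau H) \<or> is_unit m" using Hirr irreducibleD by blast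
        moreover have "\<not> is_unit (tau H)" using tHirr by (simp add: irreducible_def)
        ultimately have "is_unit m" by blast
        then have "H dvd tau H" using m by (metis dvd_mult_unit_iff dvd_refl)
        then show False using False by blast
      qed
      ultimately obtain L where L: "K = tau H * L" by blast
      define N where "N = H * tau H"
      have "tau N = N" unfolding N_def using tau_mult tau_tau' by (metis mult.commute)
      then obtain M where M: "N = pcompose M S" using even_S[OF _ a, of N c] two
        unfolding tau_def S_def by auto
      have "N dvd R" using K L unfolding N_def by (simp add: mult.assoc)
      then have "M dvd Q" using dvd_descent[OF _ a, of M c Q] two M unfolding R_def S_def by simp
      then obtain v where v: "Q = M * v" by blast
      have "is_unit M \<or> is_unit v" using irr v irreducibleD by blast
      moreover have "\<not> is_unit M" using Hnu M comp_unit unfolding N_def by (metis is_unit_mult_iff)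
      ultimately have vu: "is_unit v" by blast
      then obtain v0 where v0: "v = [:v0:]" "is_unit v0" by (auto simp: is_unit_poly_iff)
      then obtain k where k: "v0 = [:k:]" by (auto simp: is_unit_poly_iff)
      have "R = N * v" unfolding R_def v using M comp_unit[OF vu] by (simp add: pcompose_mult)
      then have "poly Q [:c:] = poly H 0 * poly H 0 * [:k:]"
        using polyR0 poly_tau0[of H] v0 k unfolding N_def by simp
      then have "poly Q [:c:] = smult k (poly H 0 * poly H 0)" by simp
      then show ?thesis using nsq by blast
    qed
  qed
qed

lemma lin_irr: "irreducible [:g, 1::'b::idom_divide:]"
proof (rule irreducibleI)
  show "[:g, 1:] \<noteq> 0" by simp
  show "\<not> is_unit [:g, 1:]" by (auto simp: is_unit_poly_iff)
  fix x y :: "'b poly" assume xy: "[:g, 1:] = x * y"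
  then have x0: "x \<noteq> 0" and y0: "y \<noteq> 0" by auto
  have dd: "degree x + degree y = 1"
  proof -
    have "degree (x * y) = degree x + degree y" using x0 y0 by (rule degree_mult_eq)
    moreover have "degree [:g, 1::'b:] = 1" by simp
    ultimately show ?thesis using xy by simp
  qed
  have lc: "lead_coeff x * lead_coeff y = 1"
  proof -
    have "lead_coeff (x * y) = lead_coeff x * lead_coeff y" by (rule lead_coeff_mult)
    moreover have "lead_coeff [:g, 1::'b:] = 1" by simp
    ultimately show ?thesis using xy by simp
  qed
  show "is_unit x \<or> is_unit y"
  proof (cases "degree x = 0")
    case True
    then have "x = [:lead_coeff x:]" by (metis degree_0_id)
    moreover have "lead_coeff x dvd 1" using lc by (metis dvd_triv_left)
    ultimately show ?thesis by (metis is_unit_const_poly_iff)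
  next
    case False
    then have "degree y = 0" using dd by simp
    then have "y = [:lead_coeff y:]" by (metis degree_0_id)
    moreover have "lead_coeff y dvd 1" using lc by (metis dvd_triv_right)
    ultimately show ?thesis by (metis is_unit_const_poly_iff)
  qed
qed




lemma C_0: "[:0:] = (0 :: 'a::comm_ring_1 poly)" by simp
lemma C_add: "[:x + y:] = [:x:] + ([:y:] :: 'a::comm_ring_1 poly)" by simp
lemma C_mult: "[:x * y:] = [:x:] * ([:y:] :: 'a::comm_ring_1 poly)" by simp

lemma nsq:
  fixes a c :: "'k::alg_closed_field"
  assumes a: "a \<noteq> 0" and two: "(2::'k) \<noteq> 0"
    and dist: "\<forall>i j. i < j \<and> j \<le> r \<longrightarrow>
           poly (iter_poly [:c, 0, a:] i) 0 \<noteq> poly (iter_poly [:c, 0, a:] j) 0"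
    and kj: "k < j" and jr: "j < r"
  shows "\<not>(\<exists>\<kappa> h. iter_poly [:c,0,a:] j + [:poly (iter_poly [:c,0,a:] (Suc k)) 0:] = smult \<kappa> (h*h))"
proof
  assume "\<exists>\<kappa> h. iter_poly [:c,0,a:] j + [:poly (iter_poly [:c,0,a:] (Suc k)) 0:] = smult \<kappa> (h*h)"
  then obtain \<kappa> h where eq: "iter_poly [:c,0,a:] j + [:poly (iter_poly [:c,0,a:] (Suc k)) 0:] = smult \<kappa> (h*h)"
    by blast
  define g where "g = iter_poly [:c,0,a:] j"
  define e where "e = poly (iter_poly [:c,0,a:] (Suc k)) 0"
  have eq': "g + [:e:] = smult \<kappa> (h*h)" using eq g_def e_def by simp
  have dg: "degree g = 2^j" using degree_iter[OF a] g_def by simp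
  have "(2::nat)^1 \<le> 2^j" using kj by (intro power_increasing) auto
  then have j2: "2 \<le> (2::nat)^j" by simp
  have dge: "degree (g + [:e:]) = 2^j" using dg j2 by (subst degree_add_eq_left) auto
  have "g + [:e:] \<noteq> 0"
  proof
    assume "g + [:e:] = 0"
    then have "degree (g + [:e:]) = 0" by simp
    with dge j2 show False by simp
  qed
  then have k0: "\<kappa> \<noteq> 0" and h0: "h \<noteq> 0" using eq' by auto
  then have "degree (smult \<kappa> (h*h)) = degree h + degree h" by (simp add: degree_mult_eq)
  then have "degree h > 0" using eq' dge j2 by simp
  then obtain x where hx: "poly h x = 0" using alg_closed_imp_poly_has_root by blast
  have p1: "poly g x + e = 0" using arg_cong[OF eq', of "\<lambda>p. poly p x"] hx by simp
  have "pderiv (g + [:e:]) = pderiv g" by (simp add: pderiv_add pderiv_pCons)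
  then have "pderiv g = smult \<kappa> (h * pderiv h + h * pderiv h)"
    using eq' by (simp add: pderiv_smult pderiv_mult)
  then have p2: "poly (pderiv g) x = 0" using hx by simp
  obtain i where i: "i < j" "poly (iter_poly [:c,0,a:] i) x = 0"
    using crit[OF a two] p2 g_def by blast
  have "poly g x = poly (iter_poly [:c,0,a:] (j - i)) 0"
    using val_at_root[of i j _ x] i g_def by simp
  then have "poly (iter_poly [:c,0,a:] (j-i)) 0 + poly (iter_poly [:c,0,a:] (Suc k)) 0 = 0"
    using p1 e_def by simp
  then show False using orb[OF two dist, of "j-i" "Suc k" j] i kj jr by simp
qed

lemma irr_chain:
  fixes a c :: "'a::field alg_closure"
  assumes a: "a \<noteq> 0" and two: "(2::'a alg_closure) \<noteq> 0"
    and dist: "\<forall>i j. i < j \<and> j \<le> r \<longrightarrow>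
           poly (iter_poly [:c, 0, a:] i) 0 \<noteq> poly (iter_poly [:c, 0, a:] j) 0"
    and jr: "j < r"
  shows "k \<le> j \<Longrightarrow> irreducible ([:iter_poly [:c,0,a:] j:] + map_poly (\<lambda>x. [:x:]) (iter_poly [:c,0,a:] k))"
proof (induction k)
  case 0
  have "[:iter_poly [:c,0,a:] j:] + map_poly (\<lambda>x. [:x:]) (iter_poly [:c,0,a:] 0) = [:iter_poly [:c,0,a:] j, 1:]"
    by (simp add: iter_0 map_poly_pCons)
  then show ?case using lin_irr by simp
next
  case (Suc k)
  define Qk where "Qk = [:iter_poly [:c,0,a:] j:] + map_poly (\<lambda>x. [:x:]) (iter_poly [:c,0,a:] k)"
  have irrk: "irreducible Qk" using Suc Qk_def by simp
  have mapF: "map_poly (\<lambda>x. [:x:]) [:c,0,a:] = [:[:c:],0,[:a:]:]" by (simp add: map_poly_pCons)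
  have step: "pcompose Qk [:[:c:],0,[:a:]:] = [:iter_poly [:c,0,a:] j:] + map_poly (\<lambda>x. [:x:]) (iter_poly [:c,0,a:] (Suc k))"
    unfolding Qk_def iter_Suc'
    by (simp add: pcompose_add map_poly_pcompose_gen[of "\<lambda>x. [:x:]", OF C_0 C_add C_mult] mapF)
  have pk: "poly (iter_poly [:c,0,a:] k) c = poly (iter_poly [:c,0,a:] (Suc k)) 0"
    unfolding poly_iter funpow_Suc_right o_apply by simp
  have pQ: "poly Qk [:c:] = iter_poly [:c,0,a:] j + [:poly (iter_poly [:c,0,a:] (Suc k)) 0:]"
    unfolding Qk_def using poly_map_poly_gen[of "\<lambda>x. [:x:]", OF C_0 C_add C_mult, of "iter_poly [:c,0,a:] k" c] pk
    by simp
  have "Suc k \<le> j" using Suc by simp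
  then have "irreducible (pcompose Qk [:[:c:],0,[:a:]:])"
    using KL[OF irrk a two] nsq[OF a two dist _ jr, of k] pQ by simp
  then show ?case using step by simp
qed

theorem mainTheorem6:
  fixes a c :: "'a::{field,finite}" and r :: nat
  assumes "CHAR('a) \<noteq> 2" and "a \<noteq> 0" and "r \<ge> 1"
    and "\<forall>i j. i < j \<and> j \<le> r \<longrightarrow>
           poly (iter_poly [:c, 0, a:] i) 0 \<noteq> poly (iter_poly [:c, 0, a:] j) 0"
  shows "\<forall>j < r.
     (\<forall>u v w :: 'a alg_closure. (u, v, w) \<noteq> (0, 0, 0) \<longrightarrow>
        \<not> (eval3 (dU (sum_form (2 ^ j) (map_poly to_ac (iter_poly [:c, 0, a:] j)))) u v w = 0 \<and>
           eval3 (dV (sum_form (2 ^ j) (map_poly to_ac (iter_poly [:c, 0, a:] j)))) u v w = 0 \<and>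
           eval3 (dW (sum_form (2 ^ j) (map_poly to_ac (iter_poly [:c, 0, a:] j)))) u v w = 0))
     \<and> irreducible (biv_sum (map_poly to_ac (iter_poly [:c, 0, a:] j)))"
proof -
  define a' where "a' = to_ac a"
  define c' where "c' = to_ac c"
  have two0: "(2::'a) \<noteq> 0"
  proof
    assume "(2::'a) = 0"
    then have "CHAR('a) dvd 2" using of_nat_eq_0_iff_char_dvd[of 2, where 'a='a] by simp
    then have "CHAR('a) \<le> 2" "CHAR('a) \<noteq> 0" by (simp add: dvd_imp_le, intro notI, simp)
    then have "CHAR('a) = 1 \<or> CHAR('a) = 2" by arith
    then show False using assms(1) CHAR_not_1[where 'a='a] by simp
  qed
  have two: "(2::'a alg_closure) \<noteq> 0" using two0 by (metis to_ac_eq_0_iff to_ac_numeral)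
  have a0: "a' \<noteq> 0" using assms(2) a'_def by simp
  have mapit: "map_poly to_ac (iter_poly [:c,0,a:] j) = iter_poly [:c',0,a':] j" for j
    by (induction j) (simp_all add: iter_0 iter_Suc map_poly_pCons
        map_poly_pcompose_gen[of to_ac, OF to_ac_0 to_ac_add to_ac_mult] a'_def c'_def)
  have polyit: "poly (iter_poly [:c',0,a':] i) 0 = to_ac (poly (iter_poly [:c,0,a:] i) 0)" for i
    using poly_map_poly_gen[of to_ac, OF to_ac_0 to_ac_add to_ac_mult, of "iter_poly [:c,0,a:] i" 0] mapit
    by simp
  have dist: "\<forall>i j. i < j \<and> j \<le> r \<longrightarrow> poly (iter_poly [:c',0,a':] i) 0 \<noteq> poly (iter_poly [:c',0,a':] j) 0"
    using assms(4) polyit by simp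
  show ?thesis
  proof (intro allI impI conjI)
    fix j :: nat assume jr: "j < r"
    fix u v w :: "'a alg_closure" assume nz: "(u, v, w) \<noteq> (0, 0, 0)"
    have D0: "(of_nat (2^j) :: 'a alg_closure) \<noteq> 0" using two by simp
    show "\<not> (eval3 (dU (sum_form (2 ^ j) (map_poly to_ac (iter_poly [:c, 0, a:] j)))) u v w = 0 \<and>
           eval3 (dV (sum_form (2 ^ j) (map_poly to_ac (iter_poly [:c, 0, a:] j)))) u v w = 0 \<and>
           eval3 (dW (sum_form (2 ^ j) (map_poly to_ac (iter_poly [:c, 0, a:] j)))) u v w = 0)"
      unfolding mapit
      by (rule grad_main[OF degree_iter[OF a0] D0 _ nz]) (rule aff[OF a0 two dist jr])
  next
    fix j :: nat assume jr: "j < r"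
    show "irreducible (biv_sum (map_poly to_ac (iter_poly [:c, 0, a:] j)))"
      unfolding mapit biv_sum_def using irr_chain[OF a0 two dist jr, of j] by simp
  qed
qed


end
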